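(* Let $K=\{x\in\mathbb C:|x|=1\}$ with its Borel $\sigma$-algebra $\mathcal Q$, let $A_1=\{e^{i\varphi}:\varphi\in[0,\pi)\}$, $A_2=\{e^{i\varphi}:\varphi\in[\pi,2\pi)\}$, and let $\Delta=\{1,2\}$ with its power set $\mathcal D$. Fix $a\in K$, let $f:K\to K$, $f(x)=ax$, and $g:K\to\Delta$, $g(x)=k$ for $x\in A_k$. Let $T$ be the generator with $T(x,\cdot)=\delta_{(f(x),g(f(x)))}$. If $a$ is not a root of unity, then $\sigma_Q(T)$ equals the Borel $\sigma$-algebra of $K$.
   Context: A generator $[(Q,\mathcal Q),T,(\Delta,\mathcal D)]$ consists of measurable spaces $(Q,\mathcal Q)$ and $(\Delta,\mathcal D)$ and a Markov transition kernel $T$ from $(Q,\mathcal Q)$ to $(Q\times\Delta,\mathcal Q\otimes\mathcal D)$. $\sigma_Q(T)$ denotes the smallest $\sigma$-subalgebra $\mathcal A$ of $\mathcal Q$ such that for every $C\in\mathcal A\otimes\mathcal D$ the function $x\mapsto T(x,C)$ is $\mathcal A$-measurable. *)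

theory Defs
  imports "HOL-Probability.Probability"
begin

definition gen_admissible ::
  "'a measure \<Rightarrow> 'b measure \<Rightarrow> ('a \<Rightarrow> ('a \<times> 'b) measure) \<Rightarrow> 'a set set \<Rightarrow> bool" where
  "gen_admissible Q D T A \<longleftrightarrow>
     sigma_algebra (space Q) A \<and> A \<subseteq> sets Q \<and>
     (\<forall>C \<in> sets (sigma (space Q) A \<Otimes>\<^sub>M D).
        (\<lambda>x. emeasure (T x) C) \<in> borel_measurable (sigma (space Q) A))"

definition sigma_Q ::
  "'a measure \<Rightarrow> 'b measure \<Rightarrow> ('a \<Rightarrow> ('a \<times> 'b) measure) \<Rightarrow> 'a set set" where
  "sigma_Q Q D T = (THE A. gen_admissible Q D T A \<and> (\<forall>B. gen_admissible Q D T B \<longrightarrow> A \<subseteq> B))"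

definition circle :: "complex set" where
  "circle = {x. cmod x = 1}"

definition circle_Q :: "complex measure" where
  "circle_Q = restrict_space borel circle"

definition arcA1 :: "complex set" where
  "arcA1 = {exp (\<i> * complex_of_real \<phi>) | \<phi>. 0 \<le> \<phi> \<and> \<phi> < pi}"

definition arcA2 :: "complex set" where
  "arcA2 = {exp (\<i> * complex_of_real \<phi>) | \<phi>. pi \<le> \<phi> \<and> \<phi> < 2 * pi}"

definition Delta_D :: "nat measure" where
  "Delta_D = count_space {1, 2}"

text \<open>g(x) = k for x in A_k (A_1, A_2 partition the circle).\<close>
definition arc_label :: "complex \<Rightarrow> nat" where
  "arc_label x = (if x \<in> arcA1 then 1 else if x \<in> arcA2 then 2 else undefined)"

end

theory Submission
  imports Defs
begin

lemma A1_exp_iff: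
  "exp (\<i> * complex_of_real \<phi>) \<in> arcA1 \<longleftrightarrow>
     (\<exists>k::int. 0 \<le> \<phi> - 2*pi*k \<and> \<phi> - 2*pi*k < pi)"
proof
  assume "exp (\<i> * complex_of_real \<phi>) \<in> arcA1"
  then obtain \<phi>0 where p: "exp (\<i> * complex_of_real \<phi>) = exp (\<i> * complex_of_real \<phi>0)" "0 \<le> \<phi>0" "\<phi>0 < pi"
    unfolding arcA1_def by auto
  then obtain n::int where "\<i> * complex_of_real \<phi> = \<i> * complex_of_real \<phi>0 + complex_of_real (real_of_int (2 * n) * pi) * \<i>"
    using exp_eq by blast
  then have "Im (\<i> * complex_of_real \<phi>) = Im (\<i> * complex_of_real \<phi>0 + complex_of_real (real_of_int (2 * n) * pi) * \<i>)" by simp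
  then have "\<phi> = \<phi>0 + 2*pi*n" by simp
  then show "\<exists>k::int. 0 \<le> \<phi> - 2*pi*k \<and> \<phi> - 2*pi*k < pi" using p by (intro exI[of _ n]) auto
next
  assume "\<exists>k::int. 0 \<le> \<phi> - 2*pi*k \<and> \<phi> - 2*pi*k < pi"
  then obtain k::int where k: "0 \<le> \<phi> - 2*pi*k" "\<phi> - 2*pi*k < pi" by blast
  have "exp (\<i> * complex_of_real \<phi>) = exp (\<i> * complex_of_real (\<phi> - 2*pi*k))"
    unfolding exp_eq by (intro exI[of _ k]) (simp add: algebra_simps)
  then show "exp (\<i> * complex_of_real \<phi>) \<in> arcA1" unfolding arcA1_def using k by blast
qed

lemma mod_lemma:
  fixes \<psi> c :: real
  assumes "0 \<le> \<psi>" "\<psi> < 2*pi" "0 \<le> c" "c \<le> 2*pi"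
  shows "(\<exists>k::int. 0 \<le> \<psi> - c - 2*pi*k \<and> \<psi> - c - 2*pi*k < pi) \<longleftrightarrow>
         (c \<le> \<psi> \<and> \<psi> < c + pi) \<or> \<psi> < c - pi"
proof
  assume "\<exists>k::int. 0 \<le> \<psi> - c - 2*pi*k \<and> \<psi> - c - 2*pi*k < pi"
  then obtain k::int where k: "0 \<le> \<psi> - c - 2*pi*k" "\<psi> - c - 2*pi*k < pi" by blast
  have "pi * (2*real_of_int k) < pi * 2" using k assms by linarith
  then have "2*real_of_int k < 2" by (simp only: mult_less_cancel_left_pos[OF pi_gt_zero])
  then have "k < 1" by simp
  moreover have "pi * (-4) < pi * (2*real_of_int k)" using k assms by linarith
  then have "-4 < 2*real_of_int k" by (simp only: mult_less_cancel_left_pos[OF pi_gt_zero])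
  then have "-2 < k" by simp
  ultimately have "k = 0 \<or> k = -1" by linarith
  then show "(c \<le> \<psi> \<and> \<psi> < c + pi) \<or> \<psi> < c - pi" using k by auto
next
  assume "(c \<le> \<psi> \<and> \<psi> < c + pi) \<or> \<psi> < c - pi"
  then show "\<exists>k::int. 0 \<le> \<psi> - c - 2*pi*k \<and> \<psi> - c - 2*pi*k < pi"
  proof
    assume "c \<le> \<psi> \<and> \<psi> < c + pi" then show ?thesis by (intro exI[of _ 0]) auto
  next
    assume "\<psi> < c - pi" then show ?thesis using assms by (intro exI[of _ "-1"]) auto
  qed
qed

lemma circle_exp: "x \<in> circle \<Longrightarrow> exp (\<i> * complex_of_real (Arg2pi x)) = x"
  unfolding circle_def using complex_norm_eq_1_exp by auto

lemma A1_circle_iff: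
  assumes "x \<in> circle" shows "x \<in> arcA1 \<longleftrightarrow> Arg2pi x < pi"
proof -
  have b: "0 \<le> Arg2pi x" "Arg2pi x < 2*pi" using Arg2pi by auto
  have "x \<in> arcA1 \<longleftrightarrow> (\<exists>k::int. 0 \<le> Arg2pi x - 0 - 2*pi*k \<and> Arg2pi x - 0 - 2*pi*k < pi)"
    using A1_exp_iff[of "Arg2pi x"] circle_exp[OF assms] by simp
  also have "\<dots> \<longleftrightarrow> Arg2pi x < pi" using mod_lemma[OF b, of 0] b by auto
  finally show ?thesis .
qed

lemma A2_circle:
  assumes "x \<in> circle" "x \<notin> arcA1" shows "x \<in> arcA2"
proof -
  have b: "0 \<le> Arg2pi x" "Arg2pi x < 2*pi" using Arg2pi by auto
  have "pi \<le> Arg2pi x" using A1_circle_iff assms by auto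
  then have "x = exp (\<i> * of_real (Arg2pi x)) \<and> pi \<le> Arg2pi x \<and> Arg2pi x < 2*pi"
    using circle_exp[OF assms(1)] b by simp
  then show ?thesis unfolding arcA2_def by blast
qed

lemma label_circle:
  assumes "x \<in> circle" shows "arc_label x = (if Arg2pi x < pi then 1 else 2)"
  using A1_circle_iff[OF assms] A2_circle[OF assms] unfolding arc_label_def by auto

lemma circle_mult: "a \<in> circle \<Longrightarrow> x \<in> circle \<Longrightarrow> a * x \<in> circle"
  unfolding circle_def by (simp add: norm_mult)

lemma space_Q: "space circle_Q = circle"
  unfolding circle_Q_def by (simp add: space_restrict_space)

lemma cnj_a:
  assumes "a \<in> circle" shows "a * cnj a = 1"
proof -
  have n: "cmod a = 1" using assms unfolding circle_def by simp
  have "a * cnj a = complex_of_real ((cmod a)^2)" by (rule complex_norm_square[symmetric])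
  also have "\<dots> = 1" using n by simp
  finally show ?thesis .
qed

lemma density:
  fixes a :: complex
  assumes a: "a \<in> circle" and nr: "\<forall>n::nat. n > 0 \<longrightarrow> a ^ n \<noteq> 1" and e: "\<epsilon> > 0"
  shows "\<exists>n::nat. n \<ge> 1 \<and> (\<exists>h::int. \<bar>n * Arg2pi (cnj a) - 2*pi*h - \<gamma>\<bar> < \<epsilon>)"
proof -
  define \<theta> where "\<theta> = Arg2pi (cnj a) / (2*pi)"
  have ca: "cnj a \<in> circle" using a unfolding circle_def by simp
  have irr: "\<theta> \<notin> \<rat>"
  proof
    assume "\<theta> \<in> \<rat>"
    then obtain p q where pq: "q > 0" "\<theta> = of_int p / of_int q" by (metis Rats_cases')
    have e: "exp (\<i> * complex_of_real (Arg2pi (cnj a))) = cnj a"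
      using ca unfolding circle_def by (simp add: complex_norm_eq_1_exp[THEN iffD1])
    have "cnj a ^ nat q = exp (of_nat (nat q) * (\<i> * complex_of_real (Arg2pi (cnj a))))"
      by (simp only: exp_of_nat_mult e)
    also have "of_nat (nat q) * (\<i> * complex_of_real (Arg2pi (cnj a))) = complex_of_real (real_of_int (2 * p) * pi) * \<i>"
    proof -
      have "Arg2pi (cnj a) = 2*pi*p/q" using pq unfolding \<theta>_def by (simp add: field_simps)
      then have eq: "real (nat q) * Arg2pi (cnj a) = 2*pi*p" using pq by simp
      show ?thesis using eq by (simp add: complex_eq_iff algebra_simps)
    qed
    also have "exp (complex_of_real (real_of_int (2 * p) * pi) * \<i>) = 1"
      by (simp add: exp_eq_1)
    finally have "cnj (a ^ nat q) = 1" by simp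
    then have "a ^ nat q = 1" by (metis complex_cnj_cnj complex_cnj_one)
    then show False using nr pq by auto
  qed
  obtain h k where hk: "k > 0" "\<bar>of_int k * \<theta> - of_int h - \<gamma>/(2*pi)\<bar> < \<epsilon>/(2*pi)"
    using sequence_of_fractional_parts_is_dense[OF irr, where \<epsilon>="\<epsilon>/(2*pi)" and \<alpha>="\<gamma>/(2*pi)"] e
    by (metis divide_pos_pos pi_gt_zero zero_less_numeral mult_pos_pos)
  define X where "X = of_int k * \<theta> - of_int h - \<gamma>/(2*pi)"
  have "\<bar>X\<bar> * (2*pi) < \<epsilon>" using hk(2) unfolding X_def
    by (subst (asm) pos_less_divide_eq) auto
  moreover have "\<bar>X\<bar> * (2*pi) = \<bar>X * (2*pi)\<bar>" by (simp add: abs_mult)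
  moreover have "real (nat k) = real_of_int k" using hk(1) by simp
  moreover have "X * (2*pi) = real_of_int k * Arg2pi (cnj a) - 2*pi*h - \<gamma>"
    unfolding X_def \<theta>_def by (simp add: field_simps)
  ultimately have "\<bar>real (nat k) * Arg2pi (cnj a) - 2*pi*h - \<gamma>\<bar> < \<epsilon>" by simp
  then show ?thesis using hk(1) by (intro exI[of _ "nat k"]) auto
qed

lemma exp_c:
  fixes a :: complex and h :: int
  assumes a: "a \<in> circle"
  shows "exp (\<i> * complex_of_real (real n * Arg2pi (cnj a) - 2*pi*h)) = cnj a ^ n"
proof -
  have ca: "cnj a \<in> circle" using a unfolding circle_def by simp
  have "exp (\<i> * complex_of_real (real n * Arg2pi (cnj a) - 2*pi*h)) = exp (of_nat n * (\<i> * complex_of_real (Arg2pi (cnj a))))"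
  proof -
    have "\<i> * complex_of_real (real n * Arg2pi (cnj a) - 2*pi*h) = of_nat n * (\<i> * complex_of_real (Arg2pi (cnj a))) + complex_of_real (real_of_int (2 * (-h)) * pi) * \<i>"
      by (simp add: complex_eq_iff algebra_simps)
    then show ?thesis unfolding exp_eq by blast
  qed
  also have "\<dots> = cnj a ^ n"
  proof -
    have e: "exp (\<i> * complex_of_real (Arg2pi (cnj a))) = cnj a"
      using ca unfolding circle_def by (simp add: complex_norm_eq_1_exp[THEN iffD1])
    show ?thesis by (simp only: exp_of_nat_mult e)
  qed
  finally show ?thesis .
qed

lemma Arg2pi_borel: "Arg2pi \<in> borel_measurable borel"
proof (subst borel_measurable_iff_le, intro allI)
  fix t show "{w \<in> space borel. Arg2pi w \<le> t} \<in> sets borel"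
    using closed_Arg2pi2pi_le[of t] by (simp add: borel_closed)
qed

lemma adm_Q:
  fixes a :: complex
  assumes a: "a \<in> circle"
  shows "gen_admissible circle_Q Delta_D
     (\<lambda>x. return (circle_Q \<Otimes>\<^sub>M Delta_D) (a * x, arc_label (a * x))) (sets circle_Q)"
proof -
  have sg: "sets (sigma (space circle_Q) (sets circle_Q)) = sets circle_Q"
    using sets.space_closed sets.sigma_algebra_axioms
    by (simp add: sets_measure_of sigma_algebra.sigma_sets_eq)
  have mulm: "(\<lambda>x. a*x) \<in> borel_measurable (borel :: complex measure)"
    by (intro borel_measurable_continuous_onI continuous_intros)
  have arg: "(\<lambda>x. Arg2pi (a*x)) \<in> borel_measurable circle_Q"
    unfolding circle_Q_def
    by (rule measurable_restrict_space1, rule measurable_compose[OF mulm Arg2pi_borel])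
  have lt: "{x \<in> space circle_Q. Arg2pi (a*x) < pi} \<in> sets circle_Q"
    using arg unfolding borel_measurable_iff_less by blast
  have g_meas: "(\<lambda>x. (a*x, arc_label (a*x))) \<in> circle_Q \<rightarrow>\<^sub>M circle_Q \<Otimes>\<^sub>M Delta_D"
  proof (rule measurable_Pair)
    show "(\<lambda>x. a*x) \<in> circle_Q \<rightarrow>\<^sub>M circle_Q" unfolding circle_Q_def
      by (rule measurable_restrict_space3[OF mulm]) (auto simp: circle_mult[OF a])
    have lb: "\<And>x. x \<in> space circle_Q \<Longrightarrow> arc_label (a*x) = (if Arg2pi (a*x) < pi then 1 else 2)"
      using label_circle circle_mult[OF a] space_Q by auto
    have s1: "(\<lambda>x. arc_label (a*x)) -` {1} \<inter> space circle_Q = {x \<in> space circle_Q. Arg2pi (a*x) < pi}"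
      using lb by (auto split: if_splits)
    have s2: "(\<lambda>x. arc_label (a*x)) -` {2} \<inter> space circle_Q = space circle_Q - {x \<in> space circle_Q. Arg2pi (a*x) < pi}"
      using lb by (auto split: if_splits)
    show "(\<lambda>x. arc_label (a*x)) \<in> circle_Q \<rightarrow>\<^sub>M Delta_D"
      unfolding Delta_D_def
    proof (subst measurable_count_space_eq2, simp, intro conjI)
      show "(\<lambda>x. arc_label (a * x)) \<in> space circle_Q \<rightarrow> {1, 2}" using lb by auto
      show "\<forall>v\<in>{1, 2}. (\<lambda>x. arc_label (a * x)) -` {v} \<inter> space circle_Q \<in> sets circle_Q"
        using s1 s2 lt by auto
    qed
  qed
  show ?thesis unfolding gen_admissible_def
  proof (intro conjI ballI)
    show "sigma_algebra (space circle_Q) (sets circle_Q)" by (rule sets.sigma_algebra_axioms)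
    show "sets circle_Q \<subseteq> sets circle_Q" by simp
    fix C assume C: "C \<in> sets (sigma (space circle_Q) (sets circle_Q) \<Otimes>\<^sub>M Delta_D)"
    then have C2: "C \<in> sets (circle_Q \<Otimes>\<^sub>M Delta_D)" using sets_pair_measure_cong[OF sg refl] by simp
    have "(\<lambda>x. indicator C (a*x, arc_label (a*x)) :: ennreal) \<in> borel_measurable circle_Q"
      by (rule measurable_compose[OF g_meas borel_measurable_indicator[OF C2]])
    then have "(\<lambda>x. indicator C (a*x, arc_label (a*x)) :: ennreal) \<in> borel_measurable (sigma (space circle_Q) (sets circle_Q))"
    proof -
      have eqm: "(sigma (space circle_Q) (sets circle_Q) \<rightarrow>\<^sub>M (borel::ennreal measure)) = (circle_Q \<rightarrow>\<^sub>M borel)"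
        by (rule measurable_cong_sets[OF sg refl])
      show ?thesis using eqm \<open>(\<lambda>x. indicator C (a*x, arc_label (a*x)) :: ennreal) \<in> borel_measurable circle_Q\<close> by simp
    qed
    then show "(\<lambda>x. emeasure (return (circle_Q \<Otimes>\<^sub>M Delta_D) (a * x, arc_label (a * x))) C) \<in> borel_measurable (sigma (space circle_Q) (sets circle_Q))"
      using emeasure_return[OF C2] by simp
  qed
qed

lemma min_part:
  fixes a :: complex
  assumes a: "a \<in> circle" and nr: "\<forall>n::nat. n > 0 \<longrightarrow> a ^ n \<noteq> 1"
    and adm: "gen_admissible circle_Q Delta_D
       (\<lambda>x. return (circle_Q \<Otimes>\<^sub>M Delta_D) (a * x, arc_label (a * x))) B"
  shows "sets circle_Q \<subseteq> B"
proof -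
  define M where "M = sigma circle B"
  have sa: "sigma_algebra circle B" and sub: "B \<subseteq> sets circle_Q"
    and meas: "\<forall>C \<in> sets (M \<Otimes>\<^sub>M Delta_D). (\<lambda>x. emeasure (return (circle_Q \<Otimes>\<^sub>M Delta_D) (a * x, arc_label (a * x))) C) \<in> borel_measurable M"
    using adm unfolding gen_admissible_def M_def space_Q by auto
  have BP: "B \<subseteq> Pow circle" using sa by (simp add: sigma_algebra_iff2)
  have spM: "space M = circle" unfolding M_def using BP by (simp add: space_measure_of)
  have setsM: "sets M = B" unfolding M_def using BP sa by (simp add: sets_measure_of sigma_algebra.sigma_sets_eq)
  have lbl12: "\<And>y. y \<in> circle \<Longrightarrow> arc_label y \<in> {1,2}" using label_circle by auto
  have lbl1: "\<And>y. y \<in> circle \<Longrightarrow> arc_label y = 1 \<longleftrightarrow> y \<in> arcA1" using label_circle A1_circle_iff by auto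
  have pre: "{x \<in> circle. (a*x, arc_label (a*x)) \<in> C} \<in> B"
    if C1: "C \<in> sets (M \<Otimes>\<^sub>M Delta_D)" and C2: "C \<in> sets (circle_Q \<Otimes>\<^sub>M Delta_D)" for C
  proof -
    have "(\<lambda>x. emeasure (return (circle_Q \<Otimes>\<^sub>M Delta_D) (a * x, arc_label (a * x))) C) \<in> borel_measurable M"
      using meas C1 by blast
    then have f: "(\<lambda>x. indicator C (a*x, arc_label (a*x)) :: ennreal) \<in> borel_measurable M"
      using emeasure_return[OF C2] by simp
    have "(\<lambda>x. indicator C (a*x, arc_label (a*x)) :: ennreal) -` {1} \<inter> space M \<in> sets M"
      by (rule measurable_sets[OF f borel_closed]) simp
    moreover have "(\<lambda>x. indicator C (a*x, arc_label (a*x)) :: ennreal) -` {1} \<inter> space M = {x \<in> circle. (a*x, arc_label (a*x)) \<in> C}"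
      using spM by (auto simp: indicator_def)
    ultimately show ?thesis using setsM by simp
  qed
  have DD: "{1,2} \<in> sets Delta_D" "{1} \<in> sets Delta_D" unfolding Delta_D_def by auto
  have rot: "{x \<in> circle. a*x \<in> E} \<in> B" if E: "E \<in> B" for E
  proof -
    have "{x \<in> circle. (a*x, arc_label (a*x)) \<in> E \<times> {1,2}} \<in> B"
      by (rule pre) (use E sub setsM DD in \<open>auto intro!: pair_measureI\<close>)
    moreover have "{x \<in> circle. (a*x, arc_label (a*x)) \<in> E \<times> {1,2}} = {x \<in> circle. a*x \<in> E}"
      using lbl12 circle_mult[OF a] by auto
    ultimately show ?thesis by simp
  qed
  have U1: "{x \<in> circle. a*x \<in> arcA1} \<in> B"
  proof -
    have cQ: "circle \<in> sets circle_Q" using sets.top[of circle_Q] space_Q by simp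
    have cM: "circle \<in> sets M" using sets.top[of M] spM by simp
    have "{x \<in> circle. (a*x, arc_label (a*x)) \<in> circle \<times> {1}} \<in> B"
      by (rule pre) (use cQ cM DD in \<open>auto intro!: pair_measureI\<close>)
    moreover have "{x \<in> circle. (a*x, arc_label (a*x)) \<in> circle \<times> {1}} = {x \<in> circle. a*x \<in> arcA1}"
      using lbl1 circle_mult[OF a] by auto
    ultimately show ?thesis by simp
  qed
  have Un: "{x \<in> circle. a^n*x \<in> arcA1} \<in> B" if n: "n \<ge> 1" for n :: nat
    using n
  proof (induction n rule: nat_induct_at_least)
    case base then show ?case using U1 by simp
  next
    case (Suc n)
    have "{x \<in> circle. a * x \<in> {y \<in> circle. a^n*y \<in> arcA1}} \<in> B" using rot[OF Suc.IH] .
    moreover have "{x \<in> circle. a * x \<in> {y \<in> circle. a^n*y \<in> arcA1}} = {x\<in>circle. a^Suc n * x \<in> arcA1}"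
      using circle_mult[OF a] by (auto simp: ac_simps)
    ultimately show ?case by simp
  qed
  define cc where "cc = (\<lambda>(n::nat, h::int). real n * Arg2pi (cnj a) - 2*pi*h)"
  define U where "U = (\<lambda>(n::nat, h::int). {x \<in> circle. a^n*x \<in> arcA1})"
  have Uang: "x \<in> U (n,h) \<longleftrightarrow> (cc (n,h) \<le> Arg2pi x \<and> Arg2pi x < cc (n,h) + pi) \<or> Arg2pi x < cc (n,h) - pi"
    if c0: "0 \<le> cc (n,h)" and c2: "cc (n,h) \<le> 2*pi" and x: "x \<in> circle" for n h x
  proof -
    define c where "c = cc (n,h)"
    have ec: "exp (\<i> * of_real c) = cnj a ^ n" unfolding c_def cc_def using exp_c[OF a] by simp
    have an1: "a^n * cnj a ^n = 1" by (simp add: power_mult_distrib[symmetric] cnj_a[OF a])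
    have "a^n = a^n * (exp (\<i> * of_real c) * exp (-(\<i> * of_real c)))" by (simp add: exp_minus_inverse)
    also have "\<dots> = (a^n * cnj a^n) * exp(-(\<i> * of_real c))" using ec by (simp add: ac_simps)
    also have "\<dots> = exp(-(\<i> * of_real c))" using an1 by simp
    finally have an: "a^n = exp(-(\<i> * of_real c))" .
    have "a^n * x = exp (-(\<i> * of_real c)) * exp (\<i> * of_real (Arg2pi x))" using an circle_exp[OF x] by simp
    also have "\<dots> = exp (\<i> * of_real (Arg2pi x - c))"
    proof -
      have "\<i> * complex_of_real (Arg2pi x - c) = (-(\<i> * of_real c)) + \<i> * of_real (Arg2pi x)"
        by (simp add: algebra_simps)
      then show ?thesis by (simp only: exp_add)
    qed
    finally have ax: "a^n * x = exp (\<i> * of_real (Arg2pi x - c))" .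
    have b: "0 \<le> Arg2pi x" "Arg2pi x < 2*pi" using Arg2pi by auto
    have "x \<in> U (n,h) \<longleftrightarrow> exp (\<i> * of_real (Arg2pi x - c)) \<in> arcA1"
      unfolding U_def using x ax by simp
    also have "\<dots> \<longleftrightarrow> (\<exists>k::int. 0 \<le> Arg2pi x - c - 2*pi*k \<and> Arg2pi x - c - 2*pi*k < pi)"
      by (rule A1_exp_iff)
    also have "\<dots> \<longleftrightarrow> (c \<le> Arg2pi x \<and> Arg2pi x < c + pi) \<or> Arg2pi x < c - pi"
      using mod_lemma[OF b, of c] c0 c2 unfolding c_def by simp
    finally show ?thesis unfolding c_def .
  qed
  have UB: "U (n,h) \<in> B" if "n \<ge> 1" for n h using Un[OF that] unfolding U_def by simp
  have Ucirc: "U p \<subseteq> circle" for p unfolding U_def by (auto split: prod.splits)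
  have Argm: "Arg2pi \<in> borel_measurable M"
  proof (subst borel_measurable_iff_le, intro allI)
    fix t :: real
    show "{w \<in> space M. Arg2pi w \<le> t} \<in> sets M"
    proof (cases "t < 0")
      case True
      have "\<not> Arg2pi w \<le> t" for w using Arg2pi[of w] True by linarith
      then have e: "{w \<in> space M. Arg2pi w \<le> t} = {}" by blast
      show ?thesis unfolding e by (rule sets.empty_sets)
    next
      case False
      define I where "I = {((n,h),(m,l)). n \<ge> 1 \<and> m \<ge> 1 \<and> t < cc (n,h) \<and> cc (n,h) < cc (m,l)
                         \<and> cc (m,l) \<le> cc (n,h) + pi \<and> cc (m,l) \<le> 2*pi}"
      have eq: "{w \<in> circle. t < Arg2pi w} = (\<Union>pq\<in>I. U (fst pq) - U (snd pq))"
      proof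
        show "{w \<in> circle. t < Arg2pi w} \<subseteq> (\<Union>pq\<in>I. U (fst pq) - U (snd pq))"
        proof
          fix w assume w: "w \<in> {w \<in> circle. t < Arg2pi w}"
          have wc: "w \<in> circle" and tp: "t < Arg2pi w" using w by auto
          have b: "0 \<le> Arg2pi w" "Arg2pi w < 2*pi" using Arg2pi by auto
          have p3: "3 < pi" by (rule pi_gt3)
          define d where "d = min ((Arg2pi w - t)/2) (1/2)"
          define d' where "d' = min ((2*pi - Arg2pi w)/2) (1/2)"
          have d: "d > 0" "d' > 0" unfolding d_def d'_def using tp b by auto
          have dd: "2*d \<le> Arg2pi w - t" "2*d \<le> 1" "2*d' \<le> 2*pi - Arg2pi w" "2*d' \<le> 1"
            unfolding d_def d'_def using tp b by (simp_all add: min_def)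
          obtain n and h :: int where nh0: "1 \<le> real n" "\<bar>real n * Arg2pi (cnj a) - 2*pi*h - (Arg2pi w - d)\<bar> < d"
            using density[OF a nr d(1)] by blast
          obtain m and l :: int where ml0: "1 \<le> real m" "\<bar>real m * Arg2pi (cnj a) - 2*pi*l - (Arg2pi w + d')\<bar> < d'"
            using density[OF a nr d(2)] by blast
          have nh: "n \<ge> 1" "\<bar>real n * Arg2pi (cnj a) - 2*pi*h - (Arg2pi w - d)\<bar> < d" using nh0 by simp_all
          have ml: "m \<ge> 1" "\<bar>real m * Arg2pi (cnj a) - 2*pi*l - (Arg2pi w + d')\<bar> < d'" using ml0 by simp_all
          have ccnh: "cc (n,h) = real n * Arg2pi (cnj a) - 2*pi*h" by (simp add: cc_def)
          have ccml: "cc (m,l) = real m * Arg2pi (cnj a) - 2*pi*l" by (simp add: cc_def)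
          have cp: "Arg2pi w - 2*d < cc (n,h)" "cc (n,h) < Arg2pi w"
            using nh(2) unfolding ccnh by (auto simp: abs_less_iff)
          have cq: "Arg2pi w < cc (m,l)" "cc (m,l) < Arg2pi w + 2*d'"
            using ml(2) unfolding ccml by (auto simp: abs_less_iff)
          have c0: "0 \<le> cc (n,h)" "cc (n,h) \<le> 2*pi" using cp dd b False by linarith+
          have c1: "0 \<le> cc (m,l)" "cc (m,l) \<le> 2*pi" using cq dd b False by linarith+
          have t1: "t < cc (n,h)" "cc (n,h) < cc (m,l)" "cc (m,l) \<le> cc (n,h) + pi" "cc (m,l) \<le> 2*pi"
            using cp cq dd p3 by linarith+
          have I: "((n,h),(m,l)) \<in> I" unfolding I_def using nh(1) ml(1) t1 by simp
          have u1: "cc (n,h) \<le> Arg2pi w" "Arg2pi w < cc (n,h) + pi" using cp dd p3 by linarith+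
          have "w \<in> U (n,h)" using Uang[OF c0 wc] u1 by blast
          moreover have u2: "\<not> cc (m,l) \<le> Arg2pi w" "\<not> Arg2pi w < cc (m,l) - pi" using cq dd p3 by linarith+
          have "w \<notin> U (m,l)" using Uang[OF c1 wc] u2 by blast
          ultimately have "w \<in> U (fst ((n,h),(m,l))) - U (snd ((n,h),(m,l)))" by simp
          then show "w \<in> (\<Union>pq\<in>I. U (fst pq) - U (snd pq))" using I by blast
        qed
        show "(\<Union>pq\<in>I. U (fst pq) - U (snd pq)) \<subseteq> {w \<in> circle. t < Arg2pi w}"
        proof
          fix w assume "w \<in> (\<Union>pq\<in>I. U (fst pq) - U (snd pq))"
          then obtain n h m l where I: "((n,h),(m,l)) \<in> I" and w: "w \<in> U (n,h)" "w \<notin> U (m,l)" by auto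
          have wc: "w \<in> circle" using w Ucirc by auto
          have c: "t < cc (n,h)" "cc (n,h) < cc (m,l)" "cc (m,l) \<le> cc (n,h) + pi" "cc (m,l) \<le> 2*pi"
            using I unfolding I_def by auto
          have c0: "0 \<le> cc (n,h)" "cc (n,h) \<le> 2*pi" using c False by linarith+
          have c1: "0 \<le> cc (m,l)" "cc (m,l) \<le> 2*pi" using c False by linarith+
          have A: "(cc (n,h) \<le> Arg2pi w \<and> Arg2pi w < cc (n,h) + pi) \<or> Arg2pi w < cc (n,h) - pi"
            using Uang[OF c0 wc] w(1) by blast
          have B: "\<not> Arg2pi w < cc (m,l) - pi" using Uang[OF c1 wc] w(2) by blast
          from A have "cc (n,h) \<le> Arg2pi w"
          proof
            assume "cc (n,h) \<le> Arg2pi w \<and> Arg2pi w < cc (n,h) + pi" then show ?thesis by simp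
          next
            assume "Arg2pi w < cc (n,h) - pi" then show ?thesis using B c by linarith
          qed
          then show "w \<in> {w \<in> circle. t < Arg2pi w}" using wc c by auto
        qed
      qed
      have "countable I" by (rule countableI_type)
      then have "(\<Union>pq\<in>I. U (fst pq) - U (snd pq)) \<in> sets M"
      proof (rule sets.countable_UN'')
        fix pq assume "pq \<in> I"
        then obtain n h m l where pq: "pq = ((n,h),(m,l))" "n \<ge> 1" "m \<ge> 1" unfolding I_def by auto
        have "U (n,h) \<in> sets M" "U (m,l) \<in> sets M" using UB[OF pq(2)] UB[OF pq(3)] setsM by auto
        then show "U (fst pq) - U (snd pq) \<in> sets M" using pq(1) by auto
      qed
      then have "space M - {w \<in> circle. t < Arg2pi w} \<in> sets M" using eq by auto
      moreover have "space M - {w \<in> circle. t < Arg2pi w} = {w \<in> space M. Arg2pi w \<le> t}" using spM by auto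
      ultimately show ?thesis by simp
    qed
  qed
  have "(\<lambda>x. exp (\<i> * complex_of_real (Arg2pi x))) \<in> borel_measurable M"
    by (rule measurable_compose[OF Argm borel_measurable_continuous_onI]) (intro continuous_intros)
  moreover have "(\<lambda>x. exp (\<i> * complex_of_real (Arg2pi x))) \<in> borel_measurable M \<longleftrightarrow> (\<lambda>x. x) \<in> borel_measurable M"
    by (rule measurable_cong) (simp add: spM circle_exp)
  ultimately have idm: "(\<lambda>x. x) \<in> borel_measurable M" by simp
  show ?thesis
  proof
    fix S assume "S \<in> sets circle_Q"
    then obtain S' where S': "S' \<in> sets borel" "S = circle \<inter> S'"
      unfolding circle_Q_def sets_restrict_space by auto
    have "(\<lambda>x. x) -` S' \<inter> space M \<in> sets M" by (rule measurable_sets[OF idm S'(1)])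
    then show "S \<in> B" using S' spM setsM by (simp add: Int_commute)
  qed
qed

theorem mainTheorem11:
  fixes a :: complex
  assumes "a \<in> circle"
    and "\<forall>n::nat. n > 0 \<longrightarrow> a ^ n \<noteq> 1"
  shows "sigma_Q circle_Q Delta_D
           (\<lambda>x. return (circle_Q \<Otimes>\<^sub>M Delta_D) (a * x, arc_label (a * x)))
         = sets circle_Q"
  unfolding sigma_Q_def
proof (rule the_equality)
  show "gen_admissible circle_Q Delta_D (\<lambda>x. return (circle_Q \<Otimes>\<^sub>M Delta_D) (a * x, arc_label (a * x))) (sets circle_Q) \<and>
    (\<forall>B. gen_admissible circle_Q Delta_D (\<lambda>x. return (circle_Q \<Otimes>\<^sub>M Delta_D) (a * x, arc_label (a * x))) B \<longrightarrow> sets circle_Q \<subseteq> B)"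
    using adm_Q[OF assms(1)] min_part[OF assms] by blast
next
  fix A assume A: "gen_admissible circle_Q Delta_D (\<lambda>x. return (circle_Q \<Otimes>\<^sub>M Delta_D) (a * x, arc_label (a * x))) A \<and>
    (\<forall>B. gen_admissible circle_Q Delta_D (\<lambda>x. return (circle_Q \<Otimes>\<^sub>M Delta_D) (a * x, arc_label (a * x))) B \<longrightarrow> A \<subseteq> B)"
  then have "A \<subseteq> sets circle_Q" using adm_Q[OF assms(1)] by blast
  moreover have "sets circle_Q \<subseteq> A" using min_part[OF assms] A by blast
  ultimately show "A = sets circle_Q" by blast
qed

end
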